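(* Let $S$ be a regular ordered semigroup and $\mathcal{B}(S)$ its semigroup of bi-ideals. Let $\mathscr{R}_{\mathcal{B}(S)}$ be the Green's $\mathscr{R}$-relation of the semigroup $(\mathcal{B}(S),* )$ and let $\mathscr{R}'$ be the relation on $\mathcal{B}(S)$ given by: $A\,\mathscr{R}'\,B$ iff for each $a\in A$ there is $b\in B$ with $a\,\mathscr{R}_S\,b$ and for each $b\in B$ there is $a\in A$ with $a\,\mathscr{R}_S\,b$. Then $\mathscr{R}_{\mathcal{B}(S)}\subseteq\mathscr{R}'$.
   Context: An ordered semigroup $(S,\cdot,\leq)$ is a semigroup with a compatible partial order. For $A\subseteq S$, $(A]=\{x\in S: x\leq a\text{ for some }a\in A\}$. $S$ is regular if for each $a\in S$ there is $x\in S$ with $a\leq axa$. A nonempty $A\subseteq S$ is a bi-ideal if $ASA\subseteq A$ and $(A]=A$; $\mathcal{B}(S)$ is the set of bi-ideals with operation $A*B=(AB]$. $a\,\mathscr{R}_S\,b$ iff $(a\cup aS]=(b\cup bS]$. $\mathscr{R}_{\mathcal{B}(S)}$ is the usual Green's $\mathscr{R}$-relation of the semigroup $(\mathcal{B}(S),* )$. *)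

theory Defs
  imports Main
begin

definition ordered_semigroup :: "('a::{semigroup_mult, order}) itself \<Rightarrow> bool" where
  "ordered_semigroup _ \<longleftrightarrow> (\<forall>a b c :: 'a. a \<le> b \<longrightarrow> a * c \<le> b * c \<and> c * a \<le> c * b)"

definition down :: "('a::order) set \<Rightarrow> 'a set" where
  "down A = {x. \<exists>a\<in>A. x \<le> a}"

definition setmul :: "('a::semigroup_mult) set \<Rightarrow> 'a set \<Rightarrow> 'a set" where
  "setmul A B = {a * b | a b. a \<in> A \<and> b \<in> B}"

definition regular_os :: "('a::{semigroup_mult, order}) itself \<Rightarrow> bool" where
  "regular_os _ \<longleftrightarrow> (\<forall>a :: 'a. \<exists>x. a \<le> a * x * a)"

definition bi_ideal :: "('a::{semigroup_mult, order}) set \<Rightarrow> bool" where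
  "bi_ideal A \<longleftrightarrow> A \<noteq> {} \<and> setmul (setmul A UNIV) A \<subseteq> A \<and> down A = A"

definition bi_ideals :: "('a::{semigroup_mult, order}) set set" where
  "bi_ideals = {A. bi_ideal A}"

definition bmul :: "('a::{semigroup_mult, order}) set \<Rightarrow> 'a set \<Rightarrow> 'a set" where
  "bmul A B = down (setmul A B)"

definition greenR_S :: "('a::{semigroup_mult, order}) \<Rightarrow> 'a \<Rightarrow> bool" where
  "greenR_S a b \<longleftrightarrow> down ({a} \<union> setmul {a} UNIV) = down ({b} \<union> setmul {b} UNIV)"

text \<open>Green's R on the semigroup (B(S), *): A B(S)^1 = B B(S)^1.\<close>
definition greenR_B :: "('a::{semigroup_mult, order}) set \<Rightarrow> 'a set \<Rightarrow> bool" where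
  "greenR_B A B \<longleftrightarrow> A \<in> bi_ideals \<and> B \<in> bi_ideals \<and>
     ({A} \<union> {bmul A X | X. X \<in> bi_ideals}) = ({B} \<union> {bmul B X | X. X \<in> bi_ideals})"

definition R' :: "('a::{semigroup_mult, order}) set \<Rightarrow> 'a set \<Rightarrow> bool" where
  "R' A B \<longleftrightarrow> A \<in> bi_ideals \<and> B \<in> bi_ideals \<and>
     (\<forall>a\<in>A. \<exists>b\<in>B. greenR_S a b) \<and> (\<forall>b\<in>B. \<exists>a\<in>A. greenR_S a b)"

end

theory Submission
  imports Defs
begin

lemma gR_intro:
  fixes a b :: "'a::{semigroup_mult, order}"
  assumes os: "ordered_semigroup TYPE('a)"
    and h1: "a \<le> b * x" and h2: "b = a * s"
  shows "greenR_S a b"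
proof -
  have mono: "\<And>p q c::'a. p \<le> q \<Longrightarrow> p * c \<le> q * c"
    using os unfolding ordered_semigroup_def by blast
  have "down ({a} \<union> setmul {a} UNIV) \<subseteq> down ({b} \<union> setmul {b} UNIV)"
  proof
    fix u assume "u \<in> down ({a} \<union> setmul {a} UNIV)"
    then obtain v where v: "u \<le> v" "v = a \<or> (\<exists>t. v = a * t)"
      unfolding down_def setmul_def by blast
    then show "u \<in> down ({b} \<union> setmul {b} UNIV)"
    proof (cases "v = a")
      case True
      then have "u \<le> b * x" using v h1 by (meson order_trans)
      then show ?thesis unfolding down_def setmul_def by blast
    next
      case False
      then obtain t where t: "v = a * t" using v by blast
      have "a * t \<le> b * (x * t)" using mono[OF h1] by (simp add: mult.assoc)
      then have "u \<le> b * (x * t)" using v t by (meson order_trans)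
      then show ?thesis unfolding down_def setmul_def by blast
    qed
  qed
  moreover have "down ({b} \<union> setmul {b} UNIV) \<subseteq> down ({a} \<union> setmul {a} UNIV)"
  proof
    fix u assume "u \<in> down ({b} \<union> setmul {b} UNIV)"
    then obtain v where v: "u \<le> v" "v = b \<or> (\<exists>t. v = b * t)"
      unfolding down_def setmul_def by blast
    then obtain t where "v = a * t"
      using h2 by (metis mult.assoc)
    then show "u \<in> down ({a} \<union> setmul {a} UNIV)" using v unfolding down_def setmul_def
      by blast
  qed
  ultimately show ?thesis unfolding greenR_S_def by blast
qed

lemma key:
  fixes A B X Y :: "'a::{semigroup_mult, order} set"
  assumes os: "ordered_semigroup TYPE('a)" and reg: "regular_os TYPE('a)"
    and bA: "bi_ideal A" and eA: "A = bmul B X" and eB: "B = bmul A Y"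
    and a: "a \<in> A"
  shows "\<exists>b\<in>B. greenR_S a b"
proof -
  have mono: "\<And>p q c::'a. p \<le> q \<Longrightarrow> p * c \<le> q * c"
   and mono2: "\<And>p q c::'a. p \<le> q \<Longrightarrow> c * p \<le> c * q"
    using os unfolding ordered_semigroup_def by blast+
  obtain z where z: "a \<le> a * z * a" using reg unfolding regular_os_def by blast
  obtain b1 x where b1: "b1 \<in> B" "x \<in> X" "a \<le> b1 * x"
    using a eA unfolding bmul_def down_def setmul_def by blast
  obtain a1 y where a1: "a1 \<in> A" "y \<in> Y" "b1 \<le> a1 * y"
    using b1(1) eB unfolding bmul_def down_def setmul_def by blast
  have "a \<le> a1 * y * x" using b1(3) mono[OF a1(3)] by (meson order_trans)
  hence "a \<le> a * z * (a1 * y * x)" using z mono2 by (meson order_trans)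
  hence le: "a \<le> (a * z * a1 * y) * x" by (simp add: mult.assoc)
  have "a * z * a1 \<in> A" using bA a a1(1) unfolding bi_ideal_def setmul_def by blast
  hence "a * z * a1 * y \<in> B" using a1(2) eB unfolding bmul_def down_def setmul_def by blast
  moreover have "greenR_S a (a * z * a1 * y)"
    by (rule gR_intro[OF os le]) (simp add: mult.assoc)
  ultimately show ?thesis by blast
qed

theorem mainTheorem5:
  assumes "ordered_semigroup TYPE('a::{semigroup_mult, order})"
    and "regular_os TYPE('a)"
  shows "{(A, B). greenR_B A B} \<subseteq> {(A :: 'a set, B). R' A B}"
proof clarify
  fix A B :: "'a set"
  assume g: "greenR_B A B"
  hence bi: "A \<in> bi_ideals" "B \<in> bi_ideals" and
    eq: "({A} \<union> {bmul A X | X. X \<in> bi_ideals}) = ({B} \<union> {bmul B X | X. X \<in> bi_ideals})"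
    unfolding greenR_B_def by auto
  have symS: "\<And>a b. greenR_S a b \<Longrightarrow> greenR_S b a" unfolding greenR_S_def by simp
  have refS: "\<And>a. greenR_S a a" unfolding greenR_S_def by simp
  have A1: "A = B \<or> (\<exists>X. A = bmul B X)" using eq by blast
  have B1: "B = A \<or> (\<exists>Y. B = bmul A Y)" using eq by blast
  show "R' A B"
  proof (cases "A = B")
    case True
    then show ?thesis using bi refS unfolding R'_def by blast
  next
    case False
    then obtain X Y where X: "A = bmul B X" and Y: "B = bmul A Y" using A1 B1 by blast
    have bA: "bi_ideal A" "bi_ideal B" using bi unfolding bi_ideals_def by auto
    show ?thesis unfolding R'_def
      using bi key[OF assms bA(1) X Y] key[OF assms bA(2) Y X] symS by blast
  qed
qed

end
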